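(* Let $H$ be a complex Hilbert space and $\{\mathcal{U}(t)\}_{t\geq 0}$ a strongly continuous semigroup on $H$ with generator $\mathcal{L}$. Let $z\in D(\mathcal{L})\cap D(\mathcal{L}^\dagger)$ with $z\neq0$, let $\mathcal{P}:=(\cdot,z)(z,z)^{-1}z$ and $\mathcal{Q}:=1-\mathcal{P}$. Let $\{\mathcal{G}(t)\}_{t\geq0}$ be the strongly continuous semigroup generated by $\overline{\mathcal{QL}}\mathcal{Q}$ and $\{e^{\mathcal{LQ}t}\}_{t\geq0}$ the strongly continuous semigroup generated by $\mathcal{LQ}$. Then for all $t\geq0$, $\mathcal{G}(t)=\mathcal{P}+\mathcal{Q}e^{\mathcal{LQ}t}$.
   Context: The scalar product $(\cdot,\cdot)$ on $H$ is conjugate-linear in its second argument. The generator is $\mathcal{L}x:=\lim_{h\searrow 0}\frac1h[\mathcal{U}(h)x-x]$ on the set $D(\mathcal{L})$ where the limit exists. $\dagger$ denotes the adjoint, the overbar the closure; products of operators carry their natural domains, e.g. $D(\mathcal{LQ})=\{x:\mathcal{Q}x\in D(\mathcal{L})\}$, $D(\overline{\mathcal{QL}}\mathcal{Q})=\{x:\mathcal{Q}x\in D(\overline{\mathcal{QL}})\}$. *)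

theory Defs
  imports "HOL-Analysis.Analysis"
begin

text \<open>The library has no complex inner product spaces, so we introduce a class:
a real Banach space with a complex scalar multiplication (extending the real one)
and a complex inner product, linear in the first and conjugate-linear in the
second argument, which induces the norm.\<close>

class complex_hilbert = real_normed_vector + complete_space +
  fixes hscale :: "complex \<Rightarrow> 'a \<Rightarrow> 'a"
  fixes hinner :: "'a \<Rightarrow> 'a \<Rightarrow> complex"
  assumes hscale_of_real: "hscale (complex_of_real r) x = scaleR r x"
  assumes hscale_add_right: "hscale c (x + y) = hscale c x + hscale c y"
  assumes hscale_add_left: "hscale (c + d) x = hscale c x + hscale d x"
  assumes hscale_assoc: "hscale c (hscale d x) = hscale (c * d) x"
  assumes hinner_cnj: "hinner x y = cnj (hinner y x)"
  assumes hinner_add_left: "hinner (x + y) w = hinner x w + hinner y w"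
  assumes hinner_scale_left: "hinner (hscale c x) y = c * hinner x y"
  assumes norm_hinner: "norm x = sqrt (Re (hinner x x))"

section \<open>Possibly unbounded operators, represented by their graphs\<close>

type_synonym 'a op = "('a \<times> 'a) set"

definition op_dom :: "'a op \<Rightarrow> 'a set" where
  "op_dom A = Domain A"

definition graph :: "('a \<Rightarrow> 'a) \<Rightarrow> 'a op" where
  "graph f = {(x, f x) | x. True}"

text \<open>Products with natural domains: \<open>A B\<close> for \<open>B\<close> everywhere defined, and \<open>B A\<close>.\<close>
definition op_comp_right :: "'a op \<Rightarrow> ('a \<Rightarrow> 'a) \<Rightarrow> 'a op" where
  "op_comp_right A f = {(x, y). (f x, y) \<in> A}"

definition op_comp_left :: "('a \<Rightarrow> 'a) \<Rightarrow> 'a op \<Rightarrow> 'a op" where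
  "op_comp_left f A = {(x, f y) | x y. (x, y) \<in> A}"

definition op_adj :: "'a::complex_hilbert op \<Rightarrow> 'a op" where
  "op_adj A = {(y, w). \<forall>(x, v) \<in> A. hinner v y = hinner x w}"

definition op_closure :: "'a::complex_hilbert op \<Rightarrow> 'a op" where
  "op_closure A = closure A"

definition bounded_clinear_op :: "('a::complex_hilbert \<Rightarrow> 'a) \<Rightarrow> bool" where
  "bounded_clinear_op T \<longleftrightarrow> bounded_linear T \<and> (\<forall>c x. T (hscale c x) = hscale c (T x))"

definition C0_semigroup :: "(real \<Rightarrow> 'a::complex_hilbert \<Rightarrow> 'a) \<Rightarrow> bool" where
  "C0_semigroup U \<longleftrightarrow>
     (\<forall>t\<ge>0. bounded_clinear_op (U t)) \<and>
     U 0 = id \<and>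
     (\<forall>s\<ge>0. \<forall>t\<ge>0. U (s + t) = U s \<circ> U t) \<and>
     (\<forall>x. continuous_on {0..} (\<lambda>t. U t x))"

definition sg_generator :: "(real \<Rightarrow> 'a::complex_hilbert \<Rightarrow> 'a) \<Rightarrow> 'a op" where
  "sg_generator U = {(x, y). ((\<lambda>h. (1 / h) *\<^sub>R (U h x - x)) \<longlongrightarrow> y) (at_right 0)}"

definition projP :: "'a::complex_hilbert \<Rightarrow> 'a \<Rightarrow> 'a" where
  "projP z x = hscale (hinner x z / hinner z z) z"

definition projQ :: "'a::complex_hilbert \<Rightarrow> 'a \<Rightarrow> 'a" where
  "projQ z x = x - projP z x"

end

theory Submission
  imports Defs
begin


subclass (in complex_hilbert) banach ..

context complex_hilbert begin

lemma hinner_zero_left[simp]: "hinner 0 y = 0"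
  using hinner_add_left[of 0 0 y] by simp

lemma hinner_add_right: "hinner x (y + w) = hinner x y + hinner x w"
  by (metis hinner_cnj hinner_add_left complex_cnj_add)

lemma hinner_scale_right: "hinner x (hscale c y) = cnj c * hinner x y"
  by (metis hinner_cnj hinner_scale_left complex_cnj_mult)

lemma hinner_scaleR_left: "hinner (r *\<^sub>R x) y = of_real r * hinner x y"
  by (metis hscale_of_real hinner_scale_left)

lemma hinner_minus_left: "hinner (- x) y = - hinner x y"
proof -
  have "hinner (- x) y = (hinner x y + hinner (- x) y) - hinner x y" by simp
  also have "hinner x y + hinner (- x) y = 0" using hinner_add_left[of x "-x" y] by simp
  finally show ?thesis by simp
qed

lemma hinner_diff_left: "hinner (x - w) y = hinner x y - hinner w y"
  using hinner_add_left[of x "-w" y] hinner_minus_left[of w y] by simp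

lemma hinner_self: "hinner x x = of_real ((norm x)\<^sup>2)"
proof -
  have im: "Im (hinner x x) = 0"
    using hinner_cnj[of x x] by (metis cnj.sel(2) equation_minus_iff neg_equal_zero)
  have "sqrt (Re (hinner x x)) \<ge> 0" using norm_hinner[of x] by (metis norm_ge_zero)
  then have "Re (hinner x x) \<ge> 0" by (metis real_sqrt_ge_0_iff)
  then have "Re (hinner x x) = (norm x)\<^sup>2" by (simp add: norm_hinner)
  with im show ?thesis by (simp add: complex_eq_iff)
qed

lemma hinner_self_eq_0: "hinner x x = 0 \<longleftrightarrow> x = 0"
  by (simp add: hinner_self)

lemma norm_hscale: "norm (hscale c x) = cmod c * norm x"
proof -
  have "of_real ((norm (hscale c x))\<^sup>2) = c * cnj c * of_real ((norm x)\<^sup>2)"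
    by (metis hinner_self hinner_scale_left hinner_scale_right mult.assoc)
  also have "c * cnj c = of_real ((cmod c)\<^sup>2)" using complex_norm_square[of c] by simp
  finally have "(norm (hscale c x))\<^sup>2 = (cmod c * norm x)\<^sup>2"
    by (metis of_real_eq_iff of_real_mult power_mult_distrib)
  then show ?thesis by (simp add: power2_eq_iff_nonneg)
qed

end

lemma projP_add: "projP z (x + y) = projP z x + projP z y"
  by (simp add: projP_def hinner_add_left add_divide_distrib hscale_add_left)

lemma projP_scaleR: "projP z (r *\<^sub>R x) = r *\<^sub>R projP z x"
proof -
  have "projP z (r *\<^sub>R x) = hscale (of_real r * (hinner x z / hinner z z)) z"
    by (simp add: projP_def hinner_scaleR_left)
  also have "\<dots> = r *\<^sub>R projP z x"
    unfolding projP_def by (metis hscale_assoc hscale_of_real)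
  finally show ?thesis .
qed

lemma hinner_zz: "z \<noteq> 0 \<Longrightarrow> hinner z z \<noteq> 0"
  by (simp add: hinner_self_eq_0)

lemma norm_projP: 
  fixes z :: "'a::complex_hilbert"
  assumes "z \<noteq> 0" shows "norm (projP z x) \<le> norm x"
proof -
  define a where "a = hinner x z / hinner z z"
  define w where "w = x - hscale a z"
  have zz: "hinner z z \<noteq> 0" using assms by (rule hinner_zz)
  have wz: "hinner w z = 0"
    using zz by (simp add: w_def hinner_diff_left hinner_scale_left a_def)
  have zw: "hinner z w = 0" using wz hinner_cnj[of z w] by simp
  have "hinner x x = hinner (w + hscale a z) (w + hscale a z)" by (simp add: w_def)
  also have "\<dots> = hinner w w + hinner (hscale a z) (hscale a z)"
    by (simp add: hinner_add_left hinner_add_right hinner_scale_left hinner_scale_right wz zw)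
  finally have "(norm x)\<^sup>2 = (norm w)\<^sup>2 + (norm (hscale a z))\<^sup>2"
    by (metis hinner_self of_real_add of_real_eq_iff)
  then have "(norm (hscale a z))\<^sup>2 \<le> (norm x)\<^sup>2" by simp
  then have "norm (hscale a z) \<le> norm x" by (simp add: power2_le_iff_abs_le)
  then show ?thesis by (simp add: projP_def a_def)
qed

lemma bl_projP: "z \<noteq> 0 \<Longrightarrow> bounded_linear (projP z)"
  apply (rule bounded_linear_intro[where K=1])
  using projP_add projP_scaleR norm_projP by auto

lemma bl_projQ: "z \<noteq> 0 \<Longrightarrow> bounded_linear (projQ z)"
  unfolding projQ_def[abs_def]
  by (intro bounded_linear_sub bounded_linear_ident bl_projP)

lemma projP_projP: "z \<noteq> 0 \<Longrightarrow> projP z (projP z x) = projP z x"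
  by (simp add: projP_def hinner_scale_left hinner_zz)

lemma projQ_projP: "z \<noteq> 0 \<Longrightarrow> projQ z (projP z x) = 0"
  by (simp add: projQ_def projP_projP)

lemma projQ_projQ: "z \<noteq> 0 \<Longrightarrow> projQ z (projQ z x) = projQ z x"
proof -
  assume z: "z \<noteq> 0"
  interpret bounded_linear "projP z" using bl_projP[OF z] .
  show ?thesis by (simp add: projQ_def diff projP_projP z)
qed



lemma vd_quot_iff:
  fixes f :: "real \<Rightarrow> 'a::real_normed_vector"
  shows "(f has_vector_derivative D) (at s within S) \<longleftrightarrow>
         ((\<lambda>r. (1/(r - s)) *\<^sub>R (f r - f s)) \<longlongrightarrow> D) (at s within S)"
proof -
  have ev: "\<forall>\<^sub>F r in at s within S. norm ((1 / norm (r - s)) *\<^sub>R (f r - (f s + (r - s) *\<^sub>R D)))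
      = norm ((1/(r - s)) *\<^sub>R (f r - f s) - D)"
  proof (rule eventually_mono[OF eventually_at_filter[THEN iffD2]])
    show "\<forall>\<^sub>F r in nhds s. r \<noteq> s \<longrightarrow> r \<in> S \<longrightarrow> r \<noteq> s" by simp
  next
    fix r assume "r \<noteq> s"
    then have e: "(1/(r - s)) *\<^sub>R ((r - s) *\<^sub>R D) = D" by simp
    have "(1/(r - s)) *\<^sub>R (f r - (f s + (r - s) *\<^sub>R D)) = (1/(r - s)) *\<^sub>R (f r - f s) - (1/(r - s)) *\<^sub>R ((r - s) *\<^sub>R D)"
      by (simp only: scaleR_diff_right scaleR_add_right diff_diff_eq)
    then have "(1/(r - s)) *\<^sub>R (f r - f s) - D = (1/(r - s)) *\<^sub>R (f r - (f s + (r - s) *\<^sub>R D))"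
      using e by simp
    then show "norm ((1 / norm (r - s)) *\<^sub>R (f r - (f s + (r - s) *\<^sub>R D)))
      = norm ((1/(r - s)) *\<^sub>R (f r - f s) - D)" by simp
  qed
  have "(f has_vector_derivative D) (at s within S) \<longleftrightarrow>
    ((\<lambda>r. (1 / norm (r - s)) *\<^sub>R (f r - (f s + (r - s) *\<^sub>R D))) \<longlongrightarrow> 0) (at s within S)"
    by (simp add: has_vector_derivative_def has_derivative_within bounded_linear_scaleR_left)
  also have "\<dots> \<longleftrightarrow> ((\<lambda>r. norm ((1 / norm (r - s)) *\<^sub>R (f r - (f s + (r - s) *\<^sub>R D)))) \<longlongrightarrow> 0) (at s within S)"
    by (rule tendsto_norm_zero_iff[symmetric])
  also have "\<dots> \<longleftrightarrow> ((\<lambda>r. norm ((1/(r - s)) *\<^sub>R (f r - f s) - D)) \<longlongrightarrow> 0) (at s within S)"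
    by (rule tendsto_cong[OF ev])
  also have "\<dots> \<longleftrightarrow> ((\<lambda>r. (1/(r - s)) *\<^sub>R (f r - f s) - D) \<longlongrightarrow> 0) (at s within S)"
    by (rule tendsto_norm_zero_iff)
  also have "\<dots> \<longleftrightarrow> ((\<lambda>r. (1/(r - s)) *\<^sub>R (f r - f s)) \<longlongrightarrow> D) (at s within S)"
    by (rule Lim_null[symmetric])
  finally show ?thesis .
qed

lemma at_left_eq: "at_left (t::real) = filtermap (\<lambda>h. t - h) (at_right 0)"
proof -
  have "at_left t = filtermap uminus (filtermap (\<lambda>x. x + - t) (at_right 0))"
    by (simp add: at_left_minus at_right_to_0[of "-t"])
  also have "\<dots> = filtermap (\<lambda>h. t - h) (at_right 0)"
    by (simp add: filtermap_filtermap)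
  finally show ?thesis .
qed

lemma right_quot:
  fixes f :: "real \<Rightarrow> 'a::real_normed_vector"
  assumes d: "(f has_vector_derivative D) (at a within S)"
    and ev: "\<forall>\<^sub>F k in at_right 0. a + k \<in> S"
  shows "((\<lambda>k. (1/k) *\<^sub>R (f (a + k) - f a)) \<longlongrightarrow> D) (at_right 0)"
proof -
  have q: "((\<lambda>r. (1/(r - a)) *\<^sub>R (f r - f a)) \<longlongrightarrow> D) (at a within S)"
    using d vd_quot_iff by blast
  have fl: "filterlim (\<lambda>k. a + k) (at a within S) (at_right 0)"
  proof (subst filterlim_at, intro conjI)
    show "\<forall>\<^sub>F k in at_right 0. a + k \<in> S \<and> a + k \<noteq> a"
      using ev eventually_at_right_less[of "0::real"] by eventually_elim auto
    have "((\<lambda>k. a + k) \<longlongrightarrow> a + 0) (at_right (0::real))"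
      by (intro tendsto_intros)
    then show "((\<lambda>k. a + k) \<longlongrightarrow> a) (at_right 0)" by simp
  qed
  show ?thesis using filterlim_compose[OF q fl] by simp
qed



lemma c0_bl: "C0_semigroup T \<Longrightarrow> t \<ge> 0 \<Longrightarrow> bounded_linear (T t)"
  by (simp add: C0_semigroup_def bounded_clinear_op_def)

lemma c0_zero: "C0_semigroup T \<Longrightarrow> T 0 x = x"
  by (simp add: C0_semigroup_def)

lemma c0_add: "C0_semigroup T \<Longrightarrow> s \<ge> 0 \<Longrightarrow> t \<ge> 0 \<Longrightarrow> T (s + t) x = T s (T t x)"
  by (simp add: C0_semigroup_def)

lemma c0_cont: "C0_semigroup T \<Longrightarrow> continuous_on {0..} (\<lambda>t. T t x)"
  by (simp add: C0_semigroup_def)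

lemma c0_ptbound:
  assumes T: "C0_semigroup T" shows "\<exists>B. \<forall>t\<in>{0..\<tau>}. norm (T t x) \<le> B"
proof -
  have "compact ((\<lambda>t. T t x) ` {0..\<tau>})"
    by (rule compact_continuous_image[OF continuous_on_subset[OF c0_cont[OF T]]]) auto
  then have "bounded ((\<lambda>t. T t x) ` {0..\<tau>})" by (rule compact_imp_bounded)
  then show ?thesis by (auto simp: bounded_iff)
qed

lemma c0_bound:
  fixes T :: "real \<Rightarrow> 'a::complex_hilbert \<Rightarrow> 'a"
  assumes T: "C0_semigroup T"
  shows "\<exists>M. \<forall>t\<in>{0..\<tau>}. \<forall>x. norm (T t x) \<le> M * norm x"
proof -
  define A where "A n = {x. \<forall>t\<in>{0..\<tau>}. norm (T t x) \<le> real n}" for n :: nat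
  have clA: "closed (A n)" for n
  proof -
    have "A n = (\<Inter>t\<in>{0..\<tau>}. {x. norm (T t x) \<le> real n})" by (auto simp: A_def)
    moreover have "closed {x. norm (T t x) \<le> real n}" if "t \<in> {0..\<tau>}" for t
    proof -
      have "bounded_linear (T t)" using c0_bl[OF T] that by auto
      then have "continuous_on UNIV (\<lambda>x. norm (T t x))"
        by (intro continuous_intros linear_continuous_on)
      then show ?thesis by (intro closed_Collect_le) (auto intro: continuous_intros)
    qed
    ultimately show ?thesis by auto
  qed
  have cov: "\<Union>(range A) = UNIV"
  proof -
    { fix x
      obtain B where B: "\<forall>t\<in>{0..\<tau>}. norm (T t x) \<le> B" using c0_ptbound[OF T] by blast
      obtain n where "B \<le> real n" using real_arch_simple by blast
      then have "x \<in> A n" using B unfolding A_def by (auto intro: order_trans)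
      then have "x \<in> \<Union>(range A)" by blast }
    then show ?thesis by auto
  qed
  have "\<exists>n. interior (A n) \<noteq> {}"
  proof (rule ccontr)
    assume "\<not> ?thesis"
    then have "euclidean interior_of \<Union>(range A) = {}"
      by (intro Baire_category_alt) (auto simp: completely_metrizable_space_euclidean clA)
    then show False using cov by simp
  qed
  then obtain n x0 where "x0 \<in> interior (A n)" by blast
  then obtain r where r: "r > 0" "ball x0 r \<subseteq> A n"
    by (meson mem_interior)
  have "norm (T t x) \<le> (4 * real n / r) * norm x" if t: "t \<in> {0..\<tau>}" for t x
  proof (cases "x = 0")
    case True
    then show ?thesis using c0_bl[OF T, of t] t linear_0[OF bounded_linear.linear] by auto
  next
    case False
    interpret bounded_linear "T t" using c0_bl[OF T, of t] t by auto
    define c where "c = r / (2 * norm x)"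
    have c: "c > 0" using r False by (simp add: c_def)
    have "x0 + c *\<^sub>R x \<in> ball x0 r" using r False by (simp add: c_def dist_norm)
    then have n1: "norm (T t (x0 + c *\<^sub>R x)) \<le> real n" using r t by (auto simp: A_def)
    have "x0 \<in> ball x0 r" using r by simp
    then have n2: "norm (T t x0) \<le> real n" using r t unfolding A_def by blast
    have "c * norm (T t x) = norm (T t (x0 + c *\<^sub>R x) - T t x0)"
      using c by (simp add: add scale)
    also have "\<dots> \<le> 2 * real n" using n1 n2 norm_triangle_ineq4[of "T t (x0 + c *\<^sub>R x)" "T t x0"] by linarith
    finally have "norm (T t x) \<le> 2 * real n / c" using c by (simp add: field_simps)
    also have "\<dots> = (4 * real n / r) * norm x" using r False by (simp add: c_def field_simps)
    finally show ?thesis .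
  qed
  then show ?thesis by blast
qed



lemma ev_lt: "0 < (t::real) \<Longrightarrow> \<forall>\<^sub>F h in at_right 0. h < t"
  by (auto simp: eventually_at_right_field)

lemma gen_unique:
  assumes "(x, v) \<in> sg_generator T" "(x, w) \<in> sg_generator T" shows "v = w"
  using assms unfolding sg_generator_def
  by (auto intro: tendsto_unique[OF trivial_limit_at_right_real])

lemma gen_inv:
  assumes T: "C0_semigroup T" and xv: "(x, v) \<in> sg_generator T" and s: "s \<ge> 0"
  shows "(T s x, T s v) \<in> sg_generator T"
proof -
  interpret bounded_linear "T s" using c0_bl[OF T s] .
  have l: "((\<lambda>h. (1 / h) *\<^sub>R (T h x - x)) \<longlongrightarrow> v) (at_right 0)"
    using xv by (simp add: sg_generator_def)
  have "((\<lambda>h. T s ((1 / h) *\<^sub>R (T h x - x))) \<longlongrightarrow> T s v) (at_right 0)"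
    by (rule tendsto[OF l])
  moreover have "\<forall>\<^sub>F h in at_right 0. T s ((1 / h) *\<^sub>R (T h x - x)) = (1 / h) *\<^sub>R (T h (T s x) - T s x)"
    using eventually_at_right_less[of "0::real"]
  proof eventually_elim
    case (elim h)
    have "T h (T s x) = T s (T h x)"
      using c0_add[OF T, of h s x] c0_add[OF T, of s h x] elim s by (simp add: add.commute)
    then show ?case by (simp add: scale diff)
  qed
  ultimately have "((\<lambda>h. (1 / h) *\<^sub>R (T h (T s x) - T s x)) \<longlongrightarrow> T s v) (at_right 0)"
    using tendsto_cong by fastforce
  then show ?thesis by (simp add: sg_generator_def)
qed

lemma c0_deriv:
  fixes T :: "real \<Rightarrow> 'a::complex_hilbert \<Rightarrow> 'a"
  assumes T: "C0_semigroup T" and xv: "(x, v) \<in> sg_generator T" and t: "t \<ge> 0"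
  shows "((\<lambda>s. T s x) has_vector_derivative T t v) (at t within {0..})"
proof -
  have l: "((\<lambda>h. (1 / h) *\<^sub>R (T h x - x)) \<longlongrightarrow> v) (at_right 0)"
    using xv by (simp add: sg_generator_def)
  have R: "((\<lambda>r. (1/(r - t)) *\<^sub>R (T r x - T t x)) \<longlongrightarrow> T t v) (at_right t)"
  proof -
    interpret bounded_linear "T t" using c0_bl[OF T t] .
    have "((\<lambda>h. T t ((1 / h) *\<^sub>R (T h x - x))) \<longlongrightarrow> T t v) (at_right 0)"
      by (rule tendsto[OF l])
    moreover have "\<forall>\<^sub>F h in at_right 0. T t ((1 / h) *\<^sub>R (T h x - x)) = (1/(h + t - t)) *\<^sub>R (T (h + t) x - T t x)"
      using eventually_at_right_less[of "0::real"]
    proof eventually_elim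
      case (elim h)
      have "T (h + t) x = T t (T h x)"
        using c0_add[OF T, of t h x] elim t by (simp add: add.commute)
      then show ?case by (simp add: scale diff)
    qed
    ultimately have "((\<lambda>h. (1/(h + t - t)) *\<^sub>R (T (h + t) x - T t x)) \<longlongrightarrow> T t v) (at_right 0)"
      using tendsto_cong by fastforce
    then show ?thesis by (simp add: at_right_to_0[of t] filterlim_filtermap)
  qed
  show ?thesis
  proof (cases "t = 0")
    case True
    then show ?thesis using R by (simp add: vd_quot_iff at_within_Ici_at_right c0_zero[OF T])
  next
    case False
    then have tp: "t > 0" using t by simp
    have "at t within {0..} = at t"
      using tp by (intro at_within_interior) (simp add: interior_Ici)
    moreover have "((\<lambda>r. (1/(r - t)) *\<^sub>R (T r x - T t x)) \<longlongrightarrow> T t v) (at_left t)"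
    proof -
      obtain M where M: "\<forall>s\<in>{0..t}. \<forall>y. norm (T s y) \<le> M * norm y"
        using c0_bound[OF T] by blast
      have a: "((\<lambda>h. T (t - h) ((1 / h) *\<^sub>R (T h x - x) - v)) \<longlongrightarrow> 0) (at_right 0)"
      proof (rule Lim_null_comparison)
        show "\<forall>\<^sub>F h in at_right 0. norm (T (t - h) ((1 / h) *\<^sub>R (T h x - x) - v)) \<le> M * norm ((1 / h) *\<^sub>R (T h x - x) - v)"
          using eventually_at_right_less[of "0::real"] ev_lt[OF tp]
        proof eventually_elim
          case (elim h) then show ?case using M by auto
        qed
        have "((\<lambda>h. M * norm ((1 / h) *\<^sub>R (T h x - x) - v)) \<longlongrightarrow> M * 0) (at_right 0)"
          by (intro tendsto_intros tendsto_norm_zero LIM_zero l)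
        then show "((\<lambda>h. M * norm ((1 / h) *\<^sub>R (T h x - x) - v)) \<longlongrightarrow> 0) (at_right 0)" by simp
      qed
      have b: "((\<lambda>h. T (t - h) v) \<longlongrightarrow> T t v) (at_right 0)"
      proof -
        have c: "((\<lambda>s. T s v) \<longlongrightarrow> T t v) (at t within {0..})"
          using c0_cont[OF T, of v] t by (simp add: continuous_on_def)
        have fl: "filterlim (\<lambda>h. t - h) (at t within {0..}) (at_right 0)"
        proof (subst filterlim_at, intro conjI)
          show "\<forall>\<^sub>F h in at_right 0. t - h \<in> {0..} \<and> t - h \<noteq> t"
            using eventually_at_right_less[of "0::real"] ev_lt[OF tp]
            by eventually_elim auto
          have "((\<lambda>h. t - h) \<longlongrightarrow> t - 0) (at_right (0::real))" by (intro tendsto_intros)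
          then show "((\<lambda>h. t - h) \<longlongrightarrow> t) (at_right 0)" by simp
        qed
        show ?thesis using filterlim_compose[OF c fl] .
      qed
      have "((\<lambda>h. T (t - h) ((1 / h) *\<^sub>R (T h x - x) - v) + T (t - h) v) \<longlongrightarrow> 0 + T t v) (at_right 0)"
        by (rule tendsto_add[OF a b])
      moreover have "\<forall>\<^sub>F h in at_right 0. T (t - h) ((1 / h) *\<^sub>R (T h x - x) - v) + T (t - h) v
          = (1/(t - h - t)) *\<^sub>R (T (t - h) x - T t x)"
        using eventually_at_right_less[of "0::real"] ev_lt[OF tp]
      proof eventually_elim
        case (elim h)
        interpret bounded_linear "T (t - h)" using c0_bl[OF T, of "t - h"] elim by simp
        have "T t x = T (t - h) (T h x)" using c0_add[OF T, of "t - h" h x] elim by simp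
        then have "T (t - h) ((1 / h) *\<^sub>R (T h x - x) - v) + T (t - h) v = (1/h) *\<^sub>R (T t x - T (t - h) x)"
          by (simp add: diff scale)
        also have "\<dots> = (1/(t - h - t)) *\<^sub>R (T (t - h) x - T t x)"
        proof -
          have "t - h - t = - h" by simp
          then show ?thesis by (simp only: divide_minus_right scaleR_minus_left scaleR_minus_right minus_diff_eq flip: scaleR_minus_right)
        qed
        finally show ?case .
      qed
      ultimately have "((\<lambda>h. (1/(t - h - t)) *\<^sub>R (T (t - h) x - T t x)) \<longlongrightarrow> T t v) (at_right 0)"
        using tendsto_cong by fastforce
      then show ?thesis by (simp add: at_left_eq filterlim_filtermap)
    qed
    ultimately show ?thesis using R by (simp add: vd_quot_iff filterlim_at_split)
  qed
qed



lemma c0_dense: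
  fixes T :: "real \<Rightarrow> 'a::complex_hilbert \<Rightarrow> 'a"
  assumes T: "C0_semigroup T"
  shows "x \<in> closure (Domain (sg_generator T))"
proof -
  define fx where "fx = (\<lambda>r. T r x)"
  define J where "J u = integral {0..u} fx" for u
  have cont: "continuous_on {0..} fx" using c0_cont[OF T] by (simp add: fx_def)
  have intg: "fx integrable_on {a..b}" if "0 \<le> a" for a b
    by (rule integrable_continuous_real[OF continuous_on_subset[OF cont]]) (use that in auto)
  have J0: "J 0 = 0" by (simp add: J_def)
  have Jquot: "((\<lambda>k. (1/k) *\<^sub>R (J (a + k) - J a)) \<longlongrightarrow> fx a) (at_right 0)" if a: "0 \<le> a" for a
  proof (rule right_quot)
    show "(J has_vector_derivative fx a) (at a within {0..a+1})"
      unfolding J_def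
      by (rule integral_has_vector_derivative[OF continuous_on_subset[OF cont]]) (use a in auto)
    show "\<forall>\<^sub>F k in at_right 0. a + k \<in> {0..a + 1}"
      using eventually_at_right_less[of "0::real"] ev_lt[OF zero_less_one] by eventually_elim (use a in auto)
  qed
  have key: "T k (J h) - J h = (J (h + k) - J h) - (J k - J 0)" if h: "h \<ge> 0" and k: "k \<ge> 0" for h k
  proof -
    have "T k (J h) = integral {0..h} (T k \<circ> fx)"
      unfolding J_def by (rule integral_linear[OF intg c0_bl[OF T k], symmetric]) simp
    also have "\<dots> = integral {0..h} (fx \<circ> (+) k)"
      by (rule integral_cong) (use k in \<open>simp add: fx_def c0_add[OF T]\<close>)
    also have "\<dots> = integral {k..h+k} fx"
      using integral_shift_Icc_real[of 0 h fx k] by (simp add: add.commute)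
    also have "\<dots> = J (h + k) - J k"
      using Henstock_Kurzweil_Integration.integral_combine[where a=0 and c=k and b="h+k" and f=fx] intg[of 0 "h+k"] h k unfolding J_def by (metis add_diff_cancel_left' add_increasing order_refl)
    finally show ?thesis using J0 by simp
  qed
  have gen: "((1/h) *\<^sub>R J h, (1/h) *\<^sub>R (fx h - fx 0)) \<in> sg_generator T" if h: "h > 0" for h
  proof -
    have "((\<lambda>k. (1/k) *\<^sub>R (J (h + k) - J h) - (1/k) *\<^sub>R (J (0 + k) - J 0)) \<longlongrightarrow> fx h - fx 0) (at_right 0)"
      by (rule tendsto_diff[OF Jquot Jquot]) (use h in auto)
    then have "((\<lambda>k. (1/h) *\<^sub>R ((1/k) *\<^sub>R (J (h + k) - J h) - (1/k) *\<^sub>R (J (0 + k) - J 0))) \<longlongrightarrow> (1/h) *\<^sub>R (fx h - fx 0)) (at_right 0)"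
      by (rule tendsto_scaleR[OF tendsto_const])
    moreover have "\<forall>\<^sub>F k in at_right 0. (1/h) *\<^sub>R ((1/k) *\<^sub>R (J (h + k) - J h) - (1/k) *\<^sub>R (J (0 + k) - J 0))
        = (1 / k) *\<^sub>R (T k ((1/h) *\<^sub>R J h) - (1/h) *\<^sub>R J h)"
      using eventually_at_right_less[of "0::real"]
    proof eventually_elim
      case (elim k)
      interpret bounded_linear "T k" using c0_bl[OF T, of k] elim by simp
      show ?case using key[of h k] h elim
        by (simp add: scale scaleR_diff_right[symmetric] mult.commute algebra_simps del: scaleR_diff_right)
    qed
    ultimately show ?thesis unfolding sg_generator_def using tendsto_cong by fastforce
  qed
  have lim: "((\<lambda>h. (1/h) *\<^sub>R J h) \<longlongrightarrow> x) (at_right 0)"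
    using Jquot[of 0] J0 by (simp add: fx_def c0_zero[OF T])
  show ?thesis
  proof (rule Lim_in_closed_set[OF closed_closure _ trivial_limit_at_right_real lim])
    show "\<forall>\<^sub>F h in at_right 0. (1/h) *\<^sub>R J h \<in> closure (Domain (sg_generator T))"
      using eventually_at_right_less[of "0::real"]
      by eventually_elim (use gen closure_subset in blast)
  qed
qed



lemma lemmaA:
  fixes G :: "real \<Rightarrow> 'a::complex_hilbert \<Rightarrow> 'a"
  assumes G: "C0_semigroup G" and t: "t \<ge> 0"
    and dy: "\<And>s. s \<in> {0..t} \<Longrightarrow> (y has_vector_derivative y' s) (at s within {0..t})"
    and gy: "\<And>s. s \<in> {0..t} \<Longrightarrow> (y s, y' s) \<in> sg_generator G"
  shows "G t (y 0) = y t"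
proof -
  define w where "w r = G (t - r) (y r)" for r
  obtain M where M: "\<forall>s\<in>{0..t}. \<forall>u. norm (G s u) \<le> M * norm u"
    using c0_bound[OF G] by blast
  have dw: "(w has_vector_derivative 0) (at s within {0..t})" if s: "s \<in> {0..t}" for s
  proof -
    define q where "q r = (1/(r - s)) *\<^sub>R (y r - y s)" for r
    have q: "(q \<longlongrightarrow> y' s) (at s within {0..t})"
      using dy[OF s] unfolding q_def vd_quot_iff .
    have a: "((\<lambda>r. G (t - r) (q r - y' s)) \<longlongrightarrow> 0) (at s within {0..t})"
    proof (rule Lim_null_comparison)
      show "\<forall>\<^sub>F r in at s within {0..t}. norm (G (t - r) (q r - y' s)) \<le> M * norm (q r - y' s)"
        using M by (auto simp: eventually_at_filter)
      have "((\<lambda>r. M * norm (q r - y' s)) \<longlongrightarrow> M * 0) (at s within {0..t})"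
        by (intro tendsto_intros tendsto_norm_zero LIM_zero q)
      then show "((\<lambda>r. M * norm (q r - y' s)) \<longlongrightarrow> 0) (at s within {0..t})" by simp
    qed
    have b: "((\<lambda>r. G (t - r) (y' s)) \<longlongrightarrow> G (t - s) (y' s)) (at s within {0..t})"
    proof -
      have "continuous_on {0..t} (\<lambda>r. G (t - r) (y' s))"
        by (rule continuous_on_compose2[OF c0_cont[OF G], of _ "\<lambda>r. t - r"])
           (auto intro: continuous_intros)
      then show ?thesis using s by (simp add: continuous_on_def)
    qed
    have c: "((\<lambda>r. (1/(r - s)) *\<^sub>R (G (t - r) (y s) - G (t - s) (y s))) \<longlongrightarrow> - G (t - s) (y' s)) (at s within {0..t})"
    proof -
      have d1: "((\<lambda>u. G u (y s)) has_vector_derivative G (t - s) (y' s)) (at (t - s) within {0..})"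
        by (rule c0_deriv[OF G gy[OF s]]) (use s in auto)
      have d0: "((\<lambda>r. t - r) has_vector_derivative -1) (at s within {0..t})"
        by (auto intro!: derivative_eq_intros)
      have "(((\<lambda>u. G u (y s)) \<circ> (\<lambda>r. t - r)) has_vector_derivative (-1) *\<^sub>R G (t - s) (y' s)) (at s within {0..t})"
        by (rule vector_diff_chain_within[OF d0 has_vector_derivative_within_subset[OF d1]]) auto
      then have "((\<lambda>r. G (t - r) (y s)) has_vector_derivative - G (t - s) (y' s)) (at s within {0..t})"
        by (simp add: o_def)
      then show ?thesis by (simp add: vd_quot_iff)
    qed
    have "((\<lambda>r. G (t - r) (q r - y' s) + G (t - r) (y' s) + (1/(r - s)) *\<^sub>R (G (t - r) (y s) - G (t - s) (y s)))
       \<longlongrightarrow> 0 + G (t - s) (y' s) + - G (t - s) (y' s)) (at s within {0..t})"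
      by (intro tendsto_add a b c)
    moreover have "\<forall>\<^sub>F r in at s within {0..t}.
        G (t - r) (q r - y' s) + G (t - r) (y' s) + (1/(r - s)) *\<^sub>R (G (t - r) (y s) - G (t - s) (y s))
        = (1/(r - s)) *\<^sub>R (w r - w s)"
      unfolding eventually_at_filter
    proof (intro always_eventually allI impI)
      fix r assume r: "r \<noteq> s" "r \<in> {0..t}"
      interpret bounded_linear "G (t - r)" using c0_bl[OF G, of "t - r"] r by simp
      show "G (t - r) (q r - y' s) + G (t - r) (y' s) + (1/(r - s)) *\<^sub>R (G (t - r) (y s) - G (t - s) (y s))
        = (1/(r - s)) *\<^sub>R (w r - w s)"
        by (simp add: q_def w_def diff scale scaleR_diff_right)
    qed
    ultimately have "((\<lambda>r. (1/(r - s)) *\<^sub>R (w r - w s)) \<longlongrightarrow> 0) (at s within {0..t})"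
      using tendsto_cong by fastforce
    then show ?thesis by (simp add: vd_quot_iff)
  qed
  obtain c where "\<And>r. r \<in> {0..t} \<Longrightarrow> w r = c"
    using has_vector_derivative_zero_constant[OF convex_real_interval(5) dw] by blast
  then have "w 0 = w t" using t by auto
  then show ?thesis by (simp add: w_def c0_zero[OF G])
qed



theorem corollary1:
  fixes U G E :: "real \<Rightarrow> 'a::complex_hilbert \<Rightarrow> 'a"
    and L :: "'a op"
    and z :: 'a
  assumes U_C0: "C0_semigroup U"
    and L_gen: "L = sg_generator U"
    and z_L: "z \<in> op_dom L"
    and z_adj: "z \<in> op_dom (op_adj L)"
    and z_ne: "z \<noteq> 0"
    and G_C0: "C0_semigroup G"
    and G_gen: "sg_generator G = op_comp_right (op_closure (op_comp_left (projQ z) L)) (projQ z)"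
    and E_C0: "C0_semigroup E"
    and E_gen: "sg_generator E = op_comp_right L (projQ z)"
  shows "\<forall>t\<ge>0. G t = (\<lambda>x. projP z x + projQ z (E t x))"
proof (intro allI impI ext)
  fix t :: real and x0 :: 'a
  assume t: "t \<ge> 0"
  interpret P: bounded_linear "projP z" using bl_projP[OF z_ne] .
  interpret Q: bounded_linear "projQ z" using bl_projQ[OF z_ne] .
  define S where "S = {x. G t x = projP z x + projQ z (E t x)}"
  have clS: "closed S"
  proof -
    interpret Gt: bounded_linear "G t" using c0_bl[OF G_C0 t] .
    interpret Et: bounded_linear "E t" using c0_bl[OF E_C0 t] .
    have "continuous_on UNIV (G t)" by (rule linear_continuous_on) (rule Gt.bounded_linear_axioms)
    moreover have "continuous_on UNIV (\<lambda>x. projP z x + projQ z (E t x))"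
      by (intro continuous_intros linear_continuous_on P.bounded_linear_axioms Q.bounded_linear_axioms
          Et.bounded_linear_axioms continuous_on_compose2[OF linear_continuous_on[OF Q.bounded_linear_axioms]]) auto
    ultimately show ?thesis unfolding S_def by (intro closed_Collect_eq) auto
  qed
  have DS: "Domain (sg_generator E) \<subseteq> S"
  proof
    fix x assume "x \<in> Domain (sg_generator E)"
    then obtain v where xv: "(x, v) \<in> sg_generator E" by blast
    define y where "y s = projP z x + projQ z (E s x)" for s
    have "G t (y 0) = y t"
    proof (rule lemmaA[OF G_C0 t])
      fix s assume s: "s \<in> {0..t}"
      have "((\<lambda>s. E s x) has_vector_derivative E s v) (at s within {0..t})"
        by (rule has_vector_derivative_within_subset[OF c0_deriv[OF E_C0 xv]]) (use s in auto)
      then have "((\<lambda>s. projQ z (E s x)) has_vector_derivative projQ z (E s v)) (at s within {0..t})"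
        by (rule Q.has_vector_derivative)
      then have "((\<lambda>s. projP z x + projQ z (E s x)) has_vector_derivative 0 + projQ z (E s v)) (at s within {0..t})"
        by (intro has_vector_derivative_add has_vector_derivative_const)
      then show "(y has_vector_derivative projQ z (E s v)) (at s within {0..t})"
        by (simp add: y_def[abs_def])
      have "(E s x, E s v) \<in> sg_generator E" using gen_inv[OF E_C0 xv] s by auto
      then have L1: "(projQ z (E s x), E s v) \<in> L" by (simp add: E_gen op_comp_right_def)
      have "(projQ z (E s x), projQ z (E s v)) \<in> op_comp_left (projQ z) L"
        using L1 unfolding op_comp_left_def by blast
      then have "(projQ z (E s x), projQ z (E s v)) \<in> op_closure (op_comp_left (projQ z) L)"
        unfolding op_closure_def using closure_subset by blast
      moreover have "projQ z (y s) = projQ z (E s x)"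
        by (simp add: y_def Q.add projQ_projP[OF z_ne] projQ_projQ[OF z_ne])
      ultimately show "(y s, projQ z (E s v)) \<in> sg_generator G"
        by (simp add: G_gen op_comp_right_def)
    qed
    moreover have "y 0 = x" by (simp add: y_def c0_zero[OF E_C0] projQ_def)
    ultimately show "x \<in> S" by (simp add: S_def y_def)
  qed
  have "x0 \<in> S"
    using closure_minimal[OF DS clS] c0_dense[OF E_C0, of x0] by blast
  then show "G t x0 = projP z x0 + projQ z (E t x0)" by (simp add: S_def)
qed


end
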